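(* Fix a positive integer $k$. Then there are only finitely many allowable critical data sets (for all types $(n,d,k)$ with $n>k$, $d\in\mathbb Z$) for which $C_{12}\le 0$ or $C_{21}\le 0$.
   Context: Let $0<k<n$ and $d$ be integers. Write $d=na-t$ with integers $a,t$, $0\le t<n$, and $ka=l(n-k)+t+m$ with integers $l,m$, $0\le m<n-k$. A critical data set for type $(n,d,k)$ is a tuple $A_c=(\alpha_c,n_1,d_1,k_1,n_2,d_2,k_2)$ with integers $n_i\ge1$, $k_i\ge0$, $d_i$, such that $n_1+n_2=n$, $d_1+d_2=d$, $k_1+k_2=k$, $\frac{d_2}{n_2}>\frac{d_1}{n_1}$, $\frac{k_1}{n_1}>\frac{k_2}{n_2}$, and $\alpha_c=\frac{d_2n_1-d_1n_2}{n_2k_1-n_1k_2}$. It is allowable if moreover $\frac tk<\alpha_c<\frac{ln+t}{k}$, $d\ge\frac1k(n^2-1)-(n-k)$, $d_1\ge\frac1{k_1}(n_1^2-1)-(n_1-k_1)$, and either ($k_2=0$ and $n_2=1$) or ($k_2\ge1$ and $d_2\ge\frac1{k_2}(n_2^2-1)-(n_2-k_2)$). For a critical data set define $C_{12}=-n_1n_2-d_2n_1+d_1n_2+k_1(d_2+n_2-k_2)$ and $C_{21}=-n_1n_2+d_2n_1-d_1n_2+k_2(d_1+n_1-k_1)$. *)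

theory Defs
  imports Main "HOL.Real"
begin

text \<open>Type (n,d,k): d = n*a - t with 0 \<le> t < n, and k*a = l*(n-k) + t + m with 0 \<le> m < n-k.
  These integers are uniquely determined; we write them out with div/mod.\<close>

definition ty_t :: "int \<Rightarrow> int \<Rightarrow> int" where
  "ty_t n d = (- d) mod n"

definition ty_a :: "int \<Rightarrow> int \<Rightarrow> int" where
  "ty_a n d = (d + ty_t n d) div n"

definition ty_l :: "int \<Rightarrow> int \<Rightarrow> int \<Rightarrow> int" where
  "ty_l n d k = (k * ty_a n d - ty_t n d) div (n - k)"

definition ty_m :: "int \<Rightarrow> int \<Rightarrow> int \<Rightarrow> int" where
  "ty_m n d k = (k * ty_a n d - ty_t n d) mod (n - k)"

definition critical_data_set ::
  "int \<Rightarrow> int \<Rightarrow> int \<Rightarrow> real \<Rightarrow> int \<Rightarrow> int \<Rightarrow> int \<Rightarrow> int \<Rightarrow> int \<Rightarrow> int \<Rightarrow> bool" where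
  "critical_data_set n d k \<alpha> n1 d1 k1 n2 d2 k2 \<longleftrightarrow>
     0 < k \<and> k < n \<and>
     n1 \<ge> 1 \<and> n2 \<ge> 1 \<and> k1 \<ge> 0 \<and> k2 \<ge> 0 \<and>
     n1 + n2 = n \<and> d1 + d2 = d \<and> k1 + k2 = k \<and>
     real_of_int d2 / real_of_int n2 > real_of_int d1 / real_of_int n1 \<and>
     real_of_int k1 / real_of_int n1 > real_of_int k2 / real_of_int n2 \<and>
     \<alpha> = real_of_int (d2 * n1 - d1 * n2) / real_of_int (n2 * k1 - n1 * k2)"

definition allowable ::
  "int \<Rightarrow> int \<Rightarrow> int \<Rightarrow> real \<Rightarrow> int \<Rightarrow> int \<Rightarrow> int \<Rightarrow> int \<Rightarrow> int \<Rightarrow> int \<Rightarrow> bool" where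
  "allowable n d k \<alpha> n1 d1 k1 n2 d2 k2 \<longleftrightarrow>
     critical_data_set n d k \<alpha> n1 d1 k1 n2 d2 k2 \<and>
     real_of_int (ty_t n d) / real_of_int k < \<alpha> \<and>
     \<alpha> < real_of_int (ty_l n d k * n + ty_t n d) / real_of_int k \<and>
     real_of_int d \<ge> real_of_int (n^2 - 1) / real_of_int k - real_of_int (n - k) \<and>
     real_of_int d1 \<ge> real_of_int (n1^2 - 1) / real_of_int k1 - real_of_int (n1 - k1) \<and>
     ((k2 = 0 \<and> n2 = 1) \<or>
      (k2 \<ge> 1 \<and> real_of_int d2 \<ge> real_of_int (n2^2 - 1) / real_of_int k2 - real_of_int (n2 - k2)))"

definition C12 :: "int \<Rightarrow> int \<Rightarrow> int \<Rightarrow> int \<Rightarrow> int \<Rightarrow> int \<Rightarrow> int" where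
  "C12 n1 d1 k1 n2 d2 k2 = - n1 * n2 - d2 * n1 + d1 * n2 + k1 * (d2 + n2 - k2)"

definition C21 :: "int \<Rightarrow> int \<Rightarrow> int \<Rightarrow> int \<Rightarrow> int \<Rightarrow> int \<Rightarrow> int" where
  "C21 n1 d1 k1 n2 d2 k2 = - n1 * n2 + d2 * n1 - d1 * n2 + k2 * (d1 + n1 - k1)"

end

theory Submission
  imports Defs
begin


lemma ty_facts:
  fixes n d k :: int
  assumes "0 < k" "k < n"
  shows "0 \<le> ty_t n d" "ty_t n d < n" "n * ty_a n d = d + ty_t n d"
        "ty_l n d k * (n - k) \<le> k * ty_a n d - ty_t n d"
proof -
  have n0: "n > 0" using assms by simp
  show "0 \<le> ty_t n d" unfolding ty_t_def using n0 by simp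
  show "ty_t n d < n" unfolding ty_t_def using n0 by simp
  have "(d + (- d) mod n) mod n = (d + (- d)) mod n" by (rule mod_add_right_eq)
  then have "(d + ty_t n d) mod n = 0" unfolding ty_t_def by simp
  then show "n * ty_a n d = d + ty_t n d" unfolding ty_a_def
    using mult_div_mod_eq[of n "d + ty_t n d"] by simp
  have "(k * ty_a n d - ty_t n d) mod (n - k) \<ge> 0" using assms by simp
  then show "ty_l n d k * (n - k) \<le> k * ty_a n d - ty_t n d" unfolding ty_l_def
    using div_mult_mod_eq[of "k * ty_a n d - ty_t n d" "n - k"] by linarith
qed



lemma allow_facts:
  assumes A: "allowable n d k \<alpha> n1 d1 k1 n2 d2 k2"
  shows "0 < k"
    and "k < n"
    and "1 \<le> n1"
    and "1 \<le> n2"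
    and "1 \<le> k1"
    and "0 \<le> k2"
    and "n = n1+n2"
    and "d = d1+d2"
    and "k = k1+k2"
    and "d1*n2 < d2*n1"
    and "k2*n1 < k1*n2"
    and "\<alpha> = real_of_int (d2*n1 - d1*n2) / real_of_int (n2*k1 - n1*k2)"
    and "ty_t n d * (k1*n2 - k2*n1) < k*(d2*n1 - d1*n2)"
    and "k*(d2*n1 - d1*n2) < (ty_l n d k * n + ty_t n d)*(k1*n2 - k2*n1)"
    and "n^2 - 1 - k*(n-k) \<le> k*d"
    and "n1^2 - 1 - k1*(n1-k1) \<le> k1*d1"
    and "(k2 = 0 \<and> n2 = 1) \<or> (1 \<le> k2 \<and> n2^2 - 1 - k2*(n2-k2) \<le> k2*d2)"
proof -
  note a = A[unfolded allowable_def critical_data_set_def]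
  have k0: "0 < k" and kn: "k < n" and n1: "1 \<le> n1" and n2: "1 \<le> n2" and k2: "0 \<le> k2"
    and hn: "n = n1+n2" and hd: "d = d1+d2" and hk: "k = k1+k2" using a by auto
  have r1: "real_of_int d2 / real_of_int n2 > real_of_int d1 / real_of_int n1" using a by auto
  have rn1: "real_of_int n1 > 0" "real_of_int n2 > 0" using n1 n2 by auto
  have "real_of_int (d1*n2) < real_of_int (d2*n1)" using r1 rn1 by (simp add: field_simps)
  then have DP: "d1*n2 < d2*n1" by (simp only: of_int_less_iff)
  have r2: "real_of_int k1 / real_of_int n1 > real_of_int k2 / real_of_int n2" using a by auto
  have "real_of_int (k2*n1) < real_of_int (k1*n2)" using r2 rn1 by (simp add: field_simps)
  then have KP: "k2*n1 < k1*n2" by (simp only: of_int_less_iff)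
  have "0 \<le> k2*n1" using k2 n1 by simp
  then have "0 < k1*n2" using KP by simp
  then have k1: "1 \<le> k1" using n2 by (simp add: zero_less_mult_iff)
  have al: "\<alpha> = real_of_int (d2*n1 - d1*n2) / real_of_int (n2*k1 - n1*k2)" using a by auto
  have "0 < n2*k1 - n1*k2" using KP by (simp add: mult.commute)
  then have Kr: "real_of_int (n2*k1 - n1*k2) > 0" by (simp only: of_int_0_less_iff)
  have kr: "real_of_int k > 0" using k0 by simp
  have "real_of_int (ty_t n d) / real_of_int k < \<alpha>" using a by auto
  then have "real_of_int (ty_t n d) / real_of_int k < real_of_int (d2*n1 - d1*n2) / real_of_int (n2*k1 - n1*k2)" using al by simp
  then have "real_of_int (ty_t n d) * real_of_int (n2*k1 - n1*k2) < real_of_int (d2*n1 - d1*n2) * real_of_int k"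
    using Kr kr by (simp add: divide_less_eq less_divide_eq mult.commute)
  then have "real_of_int (ty_t n d * (n2*k1 - n1*k2)) < real_of_int ((d2*n1 - d1*n2) * k)" by simp
  then have L: "ty_t n d * (k1*n2 - k2*n1) < k*(d2*n1 - d1*n2)" by (simp only: of_int_less_iff) (simp add: algebra_simps)
  have "\<alpha> < real_of_int (ty_l n d k * n + ty_t n d) / real_of_int k" using a by auto
  then have "real_of_int (d2*n1 - d1*n2) / real_of_int (n2*k1 - n1*k2) < real_of_int (ty_l n d k * n + ty_t n d) / real_of_int k" using al by simp
  then have "real_of_int (d2*n1 - d1*n2) * real_of_int k < real_of_int (ty_l n d k * n + ty_t n d) * real_of_int (n2*k1 - n1*k2)"
    using Kr kr by (simp add: divide_less_eq less_divide_eq mult.commute)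
  then have "real_of_int ((d2*n1 - d1*n2) * k) < real_of_int ((ty_l n d k * n + ty_t n d) * (n2*k1 - n1*k2))" by simp
  then have U: "k*(d2*n1 - d1*n2) < (ty_l n d k * n + ty_t n d)*(k1*n2 - k2*n1)" by (simp only: of_int_less_iff) (simp add: algebra_simps)
  have "real_of_int d \<ge> real_of_int (n^2 - 1) / real_of_int k - real_of_int (n - k)" using a by auto
  then have "real_of_int (n^2 - 1) / real_of_int k \<le> real_of_int (d + (n - k))" by simp
  then have "real_of_int (n^2 - 1) \<le> real_of_int (d + (n - k)) * real_of_int k" using kr by (simp add: divide_le_eq)
  then have "real_of_int (n^2 - 1) \<le> real_of_int ((d + (n - k)) * k)" by simp
  then have P5: "n^2 - 1 - k*(n-k) \<le> k*d" by (simp only: of_int_le_iff) (simp add: algebra_simps)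
  have k1r: "real_of_int k1 > 0" using k1 by simp
  have "real_of_int d1 \<ge> real_of_int (n1^2 - 1) / real_of_int k1 - real_of_int (n1 - k1)" using a by auto
  then have "real_of_int (n1^2 - 1) / real_of_int k1 \<le> real_of_int (d1 + (n1 - k1))" by simp
  then have "real_of_int (n1^2 - 1) \<le> real_of_int (d1 + (n1 - k1)) * real_of_int k1" using k1r by (simp add: divide_le_eq)
  then have "real_of_int (n1^2 - 1) \<le> real_of_int ((d1 + (n1 - k1)) * k1)" by simp
  then have P1: "n1^2 - 1 - k1*(n1-k1) \<le> k1*d1" by (simp only: of_int_le_iff) (simp add: algebra_simps)
  have P2: "(k2 = 0 \<and> n2 = 1) \<or> (1 \<le> k2 \<and> n2^2 - 1 - k2*(n2-k2) \<le> k2*d2)"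
  proof (cases "k2 = 0 \<and> n2 = 1")
    case True then show ?thesis by simp
  next
    case False
    then have k2p: "1 \<le> k2" and b: "real_of_int d2 \<ge> real_of_int (n2^2 - 1) / real_of_int k2 - real_of_int (n2 - k2)" using a by auto
    have k2r: "real_of_int k2 > 0" using k2p by simp
    from b have "real_of_int (n2^2 - 1) / real_of_int k2 \<le> real_of_int (d2 + (n2 - k2))" by simp
    then have "real_of_int (n2^2 - 1) \<le> real_of_int (d2 + (n2 - k2)) * real_of_int k2" using k2r by (simp add: divide_le_eq)
    then have "real_of_int (n2^2 - 1) \<le> real_of_int ((d2 + (n2 - k2)) * k2)" by simp
    then have "n2^2 - 1 - k2*(n2-k2) \<le> k2*d2" by (simp only: of_int_le_iff) (simp add: algebra_simps)
    then show ?thesis using k2p by simp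
  qed
  show "0 < k" by (fact k0)
  show "k < n" by (fact kn)
  show "1 \<le> n1" by (fact n1)
  show "1 \<le> n2" by (fact n2)
  show "1 \<le> k1" by (fact k1)
  show "0 \<le> k2" by (fact k2)
  show "n = n1+n2" by (fact hn)
  show "d = d1+d2" by (fact hd)
  show "k = k1+k2" by (fact hk)
  show "d1*n2 < d2*n1" by (fact DP)
  show "k2*n1 < k1*n2" by (fact KP)
  show "\<alpha> = real_of_int (d2*n1 - d1*n2) / real_of_int (n2*k1 - n1*k2)" by (fact al)
  show "ty_t n d * (k1*n2 - k2*n1) < k*(d2*n1 - d1*n2)" by (fact L)
  show "k*(d2*n1 - d1*n2) < (ty_l n d k * n + ty_t n d)*(k1*n2 - k2*n1)" by (fact U)
  show "n^2 - 1 - k*(n-k) \<le> k*d" by (fact P5)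
  show "n1^2 - 1 - k1*(n1-k1) \<le> k1*d1" by (fact P1)
  show "(k2 = 0 \<and> n2 = 1) \<or> (1 \<le> k2 \<and> n2^2 - 1 - k2*(n2-k2) \<le> k2*d2)" by (fact P2)
qed



lemma pos_ge: fixes n x :: int assumes "0 < n" "0 < n * x" shows "n \<le> n * x"
proof -
  have "0 < x" using assms by (simp add: zero_less_mult_iff)
  then show ?thesis using assms by simp
qed

lemma le_mul: fixes c x :: int assumes "1 \<le> c" "0 \<le> x" shows "x \<le> c*x"
  using mult_right_mono[of 1 c x] assms by simp

lemma le_mul_or: fixes c x :: int assumes "1 \<le> c" shows "x \<le> c*x \<or> x < 0"
  using le_mul[OF assms] by (cases "x < 0") auto

lemma m2: fixes x y S :: int
  assumes "0 \<le> x" "x \<le> S" "0 \<le> y" "y \<le> S" shows "x*y \<le> S*S"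
  using assms by (meson mult_mono order_trans)

lemma m3: fixes x y z S :: int
  assumes "0 \<le> x" "x \<le> S" "0 \<le> y" "y \<le> S" "0 \<le> z" "z \<le> S" shows "x*y*z \<le> S*S*S"
proof -
  have "x*y \<le> S*S" using m2 assms by blast
  moreover have "0 \<le> S*S" by simp
  moreover have "0 \<le> x*y" using assms by simp
  ultimately show ?thesis using assms by (meson mult_mono order_trans)
qed

lemma powS: fixes S :: int assumes "1 \<le> S"
  shows "S \<le> S^6" "S*S \<le> S^6" "S*S*S \<le> S^6" "S*S*S*S*S \<le> S^6" "S*S*S*S*S*S = S^6"
proof -
  have a: "S^j \<le> S^6" if "j \<le> 6" for j using assms that by (simp add: power_increasing)
  show "S \<le> S^6" using a[of 1] by simp
  show "S*S \<le> S^6" using a[of 2] by (simp add: power2_eq_square)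
  show "S*S*S \<le> S^6" using a[of 3] by (simp add: power3_eq_cube)
  have "S*S*S*S*S = S^5" by (simp add: power_def eval_nat_numeral algebra_simps)
  then show "S*S*S*S*S \<le> S^6" using a[of 5] by simp
  show "S*S*S*S*S*S = S^6" by (simp add: power_def eval_nat_numeral algebra_simps)
qed

locale S =
  fixes n k d n1 n2 k1 k2 d1 d2 t a l :: int
  assumes hn: "n = n1+n2" and hk: "k = k1+k2" and hd: "d = d1+d2"
  and k0: "0<k" and kn: "k<n" and n1: "1 \<le> n1" and n2: "1 \<le> n2" and k1: "1 \<le> k1" and k2: "0 \<le> k2"
  and DP: "d1*n2 < d2*n1" and KP: "k2*n1 < k1*n2"
  and t0: "0 \<le> t" and tn: "t < n" and ha: "n*a = d+t" and hl: "l*(n-k) \<le> k*a - t"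
  and L: "t*(k1*n2 - k2*n1) < k*(d2*n1 - d1*n2)"
  and U: "k*(d2*n1 - d1*n2) < (l*n+t)*(k1*n2 - k2*n1)"
  and P5: "n^2 - 1 - k*(n-k) \<le> k*d"
  and P1: "n1^2 - 1 - k1*(n1-k1) \<le> k1*d1"
begin

abbreviation "DD \<equiv> d2*n1 - d1*n2"
abbreviation "KK \<equiv> k1*n2 - k2*n1"
abbreviation "Q1 \<equiv> k*d2 + t*k2 - n2*k*a"

lemma DD_pos: "0 < DD" using DP by simp
lemma KK_pos: "0 < KK" using KP by simp

lemma id1: "k*DD - t*KK = n*Q1"
proof -
  have "k*DD - t*KK - n*Q1 = k*n2*(n*a - d - t)"
    by (simp add: hn hk hd algebra_simps)
  then show ?thesis using ha by simp
qed

lemma Q1_pos: "1 \<le> Q1"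
proof -
  have "0 < n*Q1" using id1 L by simp
  then show ?thesis using kn k0 by (simp add: zero_less_mult_iff)
qed

lemma kD_ge: "t*KK + n \<le> k*DD"
proof -
  have "n \<le> n*Q1" using Q1_pos kn k0 by simp
  then show ?thesis using id1 by simp
qed

lemma kD_ge_n: "n \<le> k*DD"
  using kD_ge t0 KK_pos by (smt (verit) mult_nonneg_nonneg)

abbreviation "Q2 \<equiv> l*KK - Q1"

lemma id2: "(l*n+t)*KK - k*DD = n*Q2"
  using id1 by (simp add: algebra_simps)

lemma Q2_pos: "1 \<le> Q2"
proof -
  have "0 < n*Q2" using id2 U by simp
  then show ?thesis using kn k0 by (simp add: zero_less_mult_iff)
qed

lemma kD_le: "k*DD \<le> (l*n+t)*KK - n"
proof -
  have "n \<le> n*Q2" using Q2_pos kn k0 by simp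
  then show ?thesis using id2 by simp
qed

lemma lnt_pos: "0 < l*n+t"
proof -
  have "0 < k*DD" using k0 DD_pos by simp
  then have "0 < (l*n+t)*KK" using U by simp
  then show ?thesis using KK_pos by (simp add: zero_less_mult_iff)
qed

lemma DnK: "DD*(n-k) < d*KK"
proof -
  have a: "(l*n+t)*(n-k) \<le> k*d"
  proof -
    have "(l*n+t)*(n-k) = n*(l*(n-k)) + t*(n-k)" by (simp add: algebra_simps)
    also have "\<dots> \<le> n*(k*a-t) + t*(n-k)" using hl kn k0 by (intro add_right_mono mult_left_mono) auto
    also have "\<dots> = k*(n*a) - t*k" by (simp add: algebra_simps)
    also have "\<dots> = k*d" using ha by (simp add: algebra_simps)
    finally show ?thesis .
  qed
  have "k*DD*(n-k) < (l*n+t)*KK*(n-k)" using U kn by simp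
  also have "\<dots> = ((l*n+t)*(n-k))*KK" by (simp add: algebra_simps)
  also have "\<dots> \<le> (k*d)*KK" using a KK_pos by (simp add: mult_right_mono)
  finally have "k*(DD*(n-k)) < k*(d*KK)" by (simp add: algebra_simps)
  then show ?thesis using k0 by simp
qed

lemma id3: "d*KK - DD*(n-k) = (d1*(n2-k2) - d2*(n1-k1))*n"
  by (simp add: hn hk hd algebra_simps)

lemma d1_lb: "-n1 - 1 \<le> d1"
proof -
  have "n1^2 - 1 - k1*(n1-k1) \<ge> -1 - k1*n1" by (simp add: algebra_simps power2_eq_square)
  moreover have "k1*(-n1-1) = -(k1*n1) - k1" by (simp add: algebra_simps)
  ultimately have "k1*(-n1-1) \<le> k1*d1" using P1 k1 by linarith
  then show ?thesis using k1 by (simp add: mult_le_cancel_left_pos)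
qed


lemma case_k20:
  assumes z: "k2 = 0" and o: "n2 = 1"
  shows "0 < C12 n1 d1 k1 n2 d2 k2" "0 < C21 n1 d1 k1 n2 d2 k2"
proof -
  define x where "x = d2 - a"
  have DDe: "d2*n1 - d1 = n*x + t"
  proof -
    have "d2*n1 - d1 - (n*x + t) = n*a - d - t" unfolding x_def using z o hn hd by (simp add: algebra_simps)
    then show ?thesis using ha by simp
  qed
  have kk: "k1 = k" using z hk by simp
  have "Q1 = k*x" unfolding x_def using z o by (simp add: algebra_simps)
  then have x1: "1 \<le> x" using Q1_pos k0 by (smt (verit) mult_le_0_iff)
  have KKe: "KK = k" using z o kk by simp
  have "Q2 = k*(l - x)" using KKe \<open>Q1 = k*x\<close> by (simp add: algebra_simps)
  then have lx: "1 \<le> l - x" using Q2_pos k0 by (smt (verit) mult_le_0_iff)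
  have "C21 n1 d1 k1 n2 d2 k2 = (d2*n1 - d1) - n1" unfolding C21_def using z o by simp
  also have "\<dots> = n*x + t - n1" using DDe by simp
  finally have c21: "C21 n1 d1 k1 n2 d2 k2 = n*x + t - n1" .
  have "n \<le> n*x" using x1 kn k0 by simp
  then show "0 < C21 n1 d1 k1 n2 d2 k2" using c21 t0 hn o by simp
  have "C12 n1 d1 k1 n2 d2 k2 = -n1 - (d2*n1 - d1) + k*(d2+1)" unfolding C12_def using z o kk by (simp add: algebra_simps)
  also have "\<dots> = -n1 - (n*x + t) + k*(d2+1)" using DDe by simp
  also have "\<dots> = 1 + (n-k)*(l - x - 1) + (k*a - t - l*(n-k))"
    using hn o unfolding x_def by (simp add: algebra_simps)
  finally have c12: "C12 n1 d1 k1 n2 d2 k2 = 1 + (n-k)*(l - x - 1) + (k*a - t - l*(n-k))" .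
  have "0 \<le> (n-k)*(l - x - 1)" using lx kn by simp
  then show "0 < C12 n1 d1 k1 n2 d2 k2" using c12 hl by simp
qed

lemma k1le: "k1 \<le> k" using hk k2 by simp
lemma k2le: "k2 \<le> k" using hk k1 by simp
lemma kkk: "k*k1*k2 \<le> k^3"
proof -
  have "k*k1*k2 \<le> k*k*k" using m3[of k k k1 k2] k0 k1 k2 k1le k2le by simp
  then show ?thesis by (simp add: power3_eq_cube)
qed
lemma k3pos: "1 \<le> k^3" using k0 by simp

lemma case_c21:
  assumes k2p: "1 \<le> k2" and P2: "n2^2 - 1 - k2*(n2-k2) \<le> k2*d2" and C: "C21 n1 d1 k1 n2 d2 k2 \<le> 0"
  shows "n \<le> (k+1)*(k+k^3)" "d1 \<le> 4*(n+k)^6" "d2 \<le> 4*(n+k)^6"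
proof -
  have I: "n2*C21 n1 d1 k1 n2 d2 k2 = (n2-k2)*DD + n1*(k2*d2 - n2^2 + k2*n2) - k1*k2*n2"
    unfolding C21_def by (simp add: algebra_simps power2_eq_square)
  have "k2*k2 \<ge> 1*1" using k2p by (meson mult_mono zero_le_one order_trans)
  then have "0 \<le> k2*d2 - n2^2 + k2*n2" using P2 by (simp add: algebra_simps power2_eq_square)
  then have nn: "0 \<le> n1*(k2*d2 - n2^2 + k2*n2)" using n1 by simp
  have "n2*C21 n1 d1 k1 n2 d2 k2 \<le> 0" using C n2 by (simp add: mult_nonneg_nonpos)
  then have A: "(n2-k2)*DD \<le> k1*k2*n2" using I nn by linarith
  have kk0: "0 \<le> k*k1*k2" using k0 k1 k2 by simp
  have n2b: "n2 \<le> k2 + k*k1*k2"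
  proof (cases "n2 \<le> k2")
    case True then show ?thesis using kk0 by simp
  next
    case False
    have "(n2-k2)*n \<le> (n2-k2)*(k*DD)" using kD_ge_n False by (simp add: mult_left_mono)
    also have "\<dots> = k*((n2-k2)*DD)" by (simp add: algebra_simps)
    also have "\<dots> \<le> k*(k1*k2*n2)" using A k0 by (simp add: mult_left_mono)
    also have "\<dots> \<le> k*(k1*k2*n)" using k0 k1 k2 hn n1 by (intro mult_left_mono) auto
    finally have "(n2-k2)*n \<le> (k*k1*k2)*n" by (simp add: algebra_simps)
    then have "n2 - k2 \<le> k*k1*k2" using kn k0 by (simp add: mult_le_cancel_right)
    then show ?thesis by simp
  qed
  have n1b: "n1 < k1*n2"
  proof -
    have "n1 \<le> k2*n1" using k2p n1 by simp
    then show ?thesis using KP by simp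
  qed
  have "n \<le> (k1+1)*n2" using n1b hn by (simp add: algebra_simps)
  also have "\<dots> \<le> (k+1)*(k+k^3)" using k1le n2b kkk k2le k1 n2 by (intro mult_mono) auto
  finally show "n \<le> (k+1)*(k+k^3)" .
  define S where "S = n + k"
  have S1: "1 \<le> S" using S_def kn k0 by simp
  have bn1: "n1 \<le> S" "n2 \<le> S" "k1 \<le> S" "k2 \<le> S" using hn hk n1 n2 k1 k2 S_def by auto
  have c21e: "C21 n1 d1 k1 n2 d2 k2 = -(n1*n2) + DD + k2*d1 + k2*n1 - k2*k1"
    unfolding C21_def by (simp add: algebra_simps)
  have "0 \<le> k2*n1" using k2 n1 by simp
  then have "k2*d1 \<le> n1*n2 + k1*k2" using c21e C DD_pos by (simp add: algebra_simps)
  moreover have "0 \<le> n1*n2 + k1*k2" using n1 n2 k1 k2 by simp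
  ultimately have d1b: "d1 \<le> n1*n2 + k1*k2"
    using le_mul_or[OF k2p, of d1] by linarith
  have "n1*n2 \<le> S*S" "k1*k2 \<le> S*S" using m2 bn1 n1 n2 k1 k2 by auto
  then have d1b': "d1 \<le> 2*(S*S)" using d1b by simp
  have S6: "0 \<le> S^6" using S1 by simp
  have "d1 \<le> 4*S^6" using d1b' powS(2)[OF S1] S6 by linarith
  then show "d1 \<le> 4*(n+k)^6" using S_def by simp
  have iden: "k1*C21 n1 d1 k1 n2 d2 k2 = k1*DD - n1*KK - k2 + k2*(k1*d1 - (n1^2 - 1 - k1*(n1-k1)))"
    unfolding C21_def by (simp add: algebra_simps power2_eq_square)
  have "k1*C21 n1 d1 k1 n2 d2 k2 \<le> 0" using C k1 by (simp add: mult_nonneg_nonpos)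
  moreover have "0 \<le> k2*(k1*d1 - (n1^2 - 1 - k1*(n1-k1)))" using P1 k2 by simp
  ultimately have "k1*DD \<le> n1*KK + k2" using iden by linarith
  moreover have "DD \<le> k1*DD" using k1 DD_pos by simp
  moreover have "n1*KK \<le> n1*(k1*n2)" using n1 k2 by (intro mult_left_mono) auto
  moreover have "n1*(k1*n2) \<le> S*S*S" using m3[of n1 S k1 n2] bn1 n1 n2 k1 by (simp add: mult.assoc)
  ultimately have DDb: "DD \<le> S*S*S + S" using bn1 by linarith
  have ide: "n1*d2 = DD + d1*n2" by (simp add: algebra_simps)
  have "d1*n2 \<le> (2*(S*S))*n2" using d1b' n2 by (simp add: mult_right_mono)
  also have "\<dots> \<le> (2*(S*S))*S" using bn1 S1 by (intro mult_left_mono) auto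
  finally have "n1*d2 \<le> 3*(S*S*S) + S" using ide DDb by (simp add: algebra_simps)
  moreover have "d2 \<le> n1*d2 \<or> d2 < 0" using le_mul_or n1 by blast
  ultimately have "d2 \<le> 3*(S*S*S) + S \<or> d2 < 0" by auto
  then show "d2 \<le> 4*(n+k)^6" using powS[OF S1] S_def S1 by auto
qed

lemma case_c12:
  assumes k2p: "1 \<le> k2" and P2: "n2^2 - 1 - k2*(n2-k2) \<le> k2*d2" and C: "C12 n1 d1 k1 n2 d2 k2 \<le> 0"
  shows "n \<le> (k+1)*(k+k^3) \<and> d1 \<le> 4*(n+k)^6 \<and> d2 \<le> 4*(n+k)^6"
proof -
  define S where "S = n + k"
  have S1: "1 \<le> S" using S_def kn k0 by simp
  have S6: "0 \<le> S^6" using S1 by simp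
  have bn1: "n1 \<le> S" "n2 \<le> S" "k1 \<le> S" "k2 \<le> S" using hn hk n1 n2 k1 k2 S_def by auto
  have d2_lb: "-n2 - 1 \<le> d2"
  proof -
    have "n2^2 - 1 - k2*(n2-k2) \<ge> -1 - k2*n2" by (simp add: algebra_simps power2_eq_square)
    moreover have "k2*(-n2-1) = -(k2*n2) - k2" by (simp add: algebra_simps)
    ultimately have "k2*(-n2-1) \<le> k2*d2" using P2 k2p by linarith
    then show ?thesis using k2p by (simp add: mult_le_cancel_left_pos)
  qed
  have kb: "k + k^3 \<le> (k+1)*(k+k^3)" using k0 k3pos by (simp add: algebra_simps)
  have III: "k2*C12 n1 d1 k1 n2 d2 k2 = n2*KK - k1 - k2*DD + k1*(k2*d2 - (n2^2 - 1 - k2*(n2-k2)))"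
    unfolding C12_def by (simp add: algebra_simps power2_eq_square)
  have "k2*C12 n1 d1 k1 n2 d2 k2 \<le> 0" using C k2p by (simp add: mult_nonneg_nonpos)
  moreover have "0 \<le> k1*(k2*d2 - (n2^2 - 1 - k2*(n2-k2)))" using P2 k1 by simp
  ultimately have IIIb: "n2*KK - k1 \<le> k2*DD" using III by linarith
  consider (gt) "k1 < n1" | (eq) "n1 = k1" | (lt) "n1 < k1" by linarith
  then show ?thesis
  proof cases
    case eq
    have "d*KK - DD*(n-k) = (d1*(n2-k2))*n" using id3 eq by simp
    then have "0 < (d1*(n2-k2))*n" using DnK by simp
    then have p1: "0 < d1*(n2-k2)" using kn k0 by (simp add: zero_less_mult_iff)
    have "KK = k1*(n2-k2)" using eq by (simp add: algebra_simps)
    then have "0 < n2 - k2" using KK_pos k1 by (simp add: zero_less_mult_iff)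
    then have d1p: "0 < d1" using p1 by (simp add: zero_less_mult_iff)
    have "k1^2 - 1 \<le> k1*d1" using P1 eq by simp
    then have kk: "k1*k1 - 1 \<le> k1*d1" by (simp add: power2_eq_square)
    have "k1 - 1 < d1"
    proof (rule ccontr)
      assume "\<not> k1 - 1 < d1"
      then have "k1*d1 \<le> k1*(k1-1)" using k1 by (intro mult_left_mono) auto
      then have "k1 \<le> 1" using kk by (simp add: algebra_simps)
      then show False using \<open>\<not> k1 - 1 < d1\<close> d1p k1 by simp
    qed
    then have "k1*n2 \<le> d1*n2" using n2 by (intro mult_right_mono) auto
    moreover have "k1*k2 < k1*n2" using \<open>0 < n2 - k2\<close> k1 by (simp add: mult_less_cancel_left_pos)
    moreover have "C12 n1 d1 k1 n2 d2 k2 = d1*n2 - k1*k2" unfolding C12_def using eq by (simp add: algebra_simps)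
    ultimately show ?thesis using C by linarith
  next
    case lt
    have ce: "C12 n1 d1 k1 n2 d2 k2 = -(n1*n2) + d*(k1-n1) + d1*(n-k1) + k1*(n2-k2)"
      unfolding C12_def by (simp add: hn hd algebra_simps)
    have "n1^2 \<ge> 1" using mult_mono[of 1 n1 1 n1] n1 by (simp add: power2_eq_square)
    moreover have "k1*(n1-k1) \<le> 0" using lt k1 by (simp add: mult_nonneg_nonpos)
    ultimately have "0 \<le> k1*d1" using P1 by linarith
    then have d1p: "0 \<le> d1" using k1 by (simp add: zero_le_mult_iff)
    have "0 \<le> n - k1" using kn k1le by simp
    then have "0 \<le> d1*(n-k1)" using d1p by simp
    moreover have "(n1-k1)*n2 \<le> 0" using lt n2 by (simp add: mult_nonpos_nonneg)
    ultimately have "d*(k1-n1) \<le> k1*k2" using ce C by (simp add: algebra_simps)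
    moreover have "0 \<le> k1*k2" using k1 k2 by simp
    ultimately have db: "d \<le> k1*k2" using le_mul_or[of "k1-n1" d] lt by (simp add: mult.commute) linarith
    have "k*d \<le> k*(k1*k2)" using db k0 by simp
    also have "\<dots> \<le> k^3" using kkk by (simp add: mult.assoc)
    finally have "n^2 - 1 - k*(n-k) \<le> k^3" using P5 by linarith
    moreover have "k*k \<ge> 1" using mult_mono[of 1 k 1 k] k0 by simp
    ultimately have "n*(n-k) \<le> k^3" by (simp add: algebra_simps power2_eq_square)
    moreover have "n - k \<le> n*(n-k)" using le_mul[of n "n-k"] kn k0 by simp
    ultimately have "n \<le> k + k^3" by linarith
    then have nb: "n \<le> (k+1)*(k+k^3)" using kb by linarith
    have "k1*k2 \<le> S*S" using m2 bn1 k1 k2 by auto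
    then have "d1 \<le> S*S + S + 1" "d2 \<le> S*S" using db d2_lb d1p hd bn1 by linarith+
    moreover have "1 \<le> S^6" using S1 by simp
    ultimately have "d1 \<le> 4*S^6" "d2 \<le> 4*S^6" using powS[OF S1] S6 by linarith+
    then show ?thesis using nb S_def by simp
  next
    case gt
    define c where "c = n1 - k1"
    define lnt where "lnt = l*n + t"
    have c1: "1 \<le> c" using gt c_def by simp
    define T where "T = k*n2*c - (n-k1) + k*k1*k2 - k2*c*lnt"
    have "k*(-C12 n1 d1 k1 n2 d2 k2) + (n-k1)*(Q2-1) + n2*k1*(k*a - t - l*(n-k)) - T = k*n2*(n*a - d - t)"
      unfolding C12_def T_def c_def lnt_def by (simp add: hn hk hd algebra_simps)
    then have Teq: "T = k*(-C12 n1 d1 k1 n2 d2 k2) + (n-k1)*(Q2-1) + n2*k1*(k*a - t - l*(n-k))"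
      using ha by simp
    have "0 \<le> k*(-C12 n1 d1 k1 n2 d2 k2)" using C k0 by (simp add: mult_nonneg_nonpos)
    moreover have "0 \<le> (n-k1)*(Q2-1)" using Q2_pos hn k1le kn by simp
    moreover have "0 \<le> n2*k1*(k*a - t - l*(n-k))" using hl n2 k1 by simp
    ultimately have T0: "0 \<le> T" using Teq by linarith
    then have Tin: "k2*c*lnt \<le> k*n2*c - (n-k1) + k*k1*k2" unfolding T_def by simp
    have "k*(n2*KK - k1) \<le> k*(k2*DD)" using IIIb k0 by simp
    also have "\<dots> = k2*(k*DD)" by (simp add: algebra_simps)
    also have "\<dots> \<le> k2*(lnt*KK - n)" using kD_le k2 lnt_def by (simp add: mult_left_mono)
    finally have A: "k*(n2*KK - k1) \<le> k2*(lnt*KK - n)" .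
    have "k*(n2*KK - k1)*c \<le> k2*(lnt*KK - n)*c" using A c1 by (simp add: mult_right_mono)
    also have "\<dots> = KK*(k2*c*lnt) - k2*n*c" by (simp add: algebra_simps)
    also have "\<dots> \<le> KK*(k*n2*c - (n-k1) + k*k1*k2) - k2*n*c" using Tin KK_pos by (simp add: mult_left_mono)
    finally have fin: "KK*(n - k1 - k*k1*k2) + k2*n*c \<le> k*k1*c" by (simp add: algebra_simps)
    have nb0: "n \<le> k1 + k*k1*k2"
    proof (rule ccontr)
      assume nc: "\<not> n \<le> k1 + k*k1*k2"
      then have "0 < KK*(n - k1 - k*k1*k2)" using KK_pos by simp
      then have "(k2*n)*c < (k*k1)*c" using fin by (simp add: algebra_simps)
      then have "k2*n < k*k1" using c1 by (simp add: mult_less_cancel_right)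
      moreover have "n \<le> k2*n" using le_mul k2p kn k0 by simp
      moreover have "k*k1 \<le> k*k1*k2" using le_mul[of k2 "k*k1"] k2p k0 k1 by (simp add: mult.commute)
      ultimately show False using nc k1 by linarith
    qed
    have "k1 + k*k1*k2 \<le> k + k^3" using k1le kkk by linarith
    then have nb: "n \<le> (k+1)*(k+k^3)" using nb0 kb by linarith
    have lntp: "0 < lnt" using lnt_pos lnt_def by simp
    have "1 \<le> k2*c" using mult_mono[of 1 k2 1 c] k2p c1 by simp
    then have "lnt \<le> (k2*c)*lnt" using le_mul lntp by simp
    also have "\<dots> \<le> k*n2*c + k*k1*k2" using Tin hn k1le kn by simp
    finally have lb1: "lnt \<le> k*n2*c + k*k1*k2" .
    have kS: "k \<le> S" using S_def kn k0 by simp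
    have cS: "c \<le> S" "0 \<le> c" using c_def bn1 k1 c1 by auto
    have "k*n2*c \<le> S*S*S" using m3[of k S n2 c] bn1 cS kS n2 k0 by simp
    moreover have "k*k1*k2 \<le> S*S*S" using m3[of k S k1 k2] bn1 k1 k2 k0 kS by simp
    ultimately have lb2: "lnt \<le> 2*(S*S*S)" using lb1 by linarith
    have "k1*n2 \<le> S*S" using m2[of k1 S n2] bn1 k1 n2 by simp
    moreover have "0 \<le> k2*n1" using k2 n1 by simp
    ultimately have KKb: "KK \<le> S*S" by linarith
    have "DD \<le> k*DD" using le_mul[of k DD] k0 DD_pos by simp
    also have "\<dots> < lnt*KK" using U lnt_def by simp
    also have "\<dots> \<le> (2*(S*S*S))*(S*S)" using lb2 KKb lntp KK_pos S1 by (intro mult_mono) auto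
    finally have DDb: "DD \<le> 2*(S*S*S*S*S)" by (simp add: algebra_simps)
    have ce: "C12 n1 d1 k1 n2 d2 k2 = -(n1*n2) - DD + k1*d2 + k1*n2 - k1*k2"
      unfolding C12_def by (simp add: algebra_simps)
    have "n1*n2 \<le> S*S" using m2 bn1 n1 n2 by auto
    moreover have "0 \<le> k1*n2" "0 \<le> k1*k2" using k1 n2 k2 by auto
    ultimately have "k1*d2 \<le> S*S + 2*(S*S*S*S*S) + S*S" using ce C DDb m2[of k1 S k2] bn1 k1 k2 by linarith
    moreover have "0 \<le> S*S" "0 \<le> S*S*S*S*S" using S1 by simp_all
    moreover have "d2 \<le> k1*d2 \<or> d2 < 0" using le_mul_or[OF k1, of d2] .
    ultimately have "d2 \<le> S*S + 2*(S*S*S*S*S) + S*S" by linarith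
    moreover have s25: "S*S \<le> S*S*S*S*S"
    proof -
      have "1 \<le> S^3" using S1 by simp
      then have "1 \<le> S*S*S" by (simp add: power3_eq_cube)
      then have "S*S \<le> (S*S*S)*(S*S)" using le_mul[of "S*S*S" "S*S"] by simp
      then show ?thesis by (simp add: algebra_simps)
    qed
    ultimately have d2b: "d2 \<le> 4*(S*S*S*S*S)" by linarith
    then have d2b6: "d2 \<le> 4*S^6" using powS[OF S1] S6 by linarith
    have "n2*d1 = d2*n1 - DD" by (simp add: algebra_simps)
    then have "n2*d1 < d2*n1" using DD_pos by (simp add: mult.commute)
    have "d1 \<le> 4*S^6"
    proof (cases "d1 < 0")
      case True then show ?thesis using S6 by linarith
    next
      case False
      have "d1 \<le> n2*d1" using le_mul[of n2 d1] n2 False by simp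
      also have "\<dots> < d2*n1" by fact
      also have "\<dots> \<le> (4*(S*S*S*S*S))*S" proof (cases "d2 < 0")
        case True then have "d2*n1 < 0" using n1 by (simp add: mult_neg_pos) 
        moreover have "0 \<le> (4*(S*S*S*S*S))*S" using S1 by simp
        ultimately show ?thesis by linarith
      next
        case False then show ?thesis using d2b bn1 n1 by (intro mult_mono) auto
      qed
      also have "\<dots> = 4*S^6" using powS(5)[OF S1] by (simp add: algebra_simps)
      finally show ?thesis by simp
    qed
    then show ?thesis using nb d2b6 S_def by simp
  qed
qed


lemma d2_lb_gen:
  assumes k2p: "1 \<le> k2" and P2: "n2^2 - 1 - k2*(n2-k2) \<le> k2*d2"
  shows "-n2 - 1 \<le> d2"
proof -
  have "n2^2 - 1 - k2*(n2-k2) \<ge> -1 - k2*n2" by (simp add: algebra_simps power2_eq_square)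
  moreover have "k2*(-n2-1) = -(k2*n2) - k2" by (simp add: algebra_simps)
  ultimately have "k2*(-n2-1) \<le> k2*d2" using P2 k2p by linarith
  then show ?thesis using k2p by (simp add: mult_le_cancel_left_pos)
qed

end

definition Bn :: "int \<Rightarrow> int" where "Bn k = (k+1)*(k+k^3)"
definition Wb :: "int \<Rightarrow> int" where "Wb k = 2*(4*(Bn k + k)^6 + Bn k + k + 1) + Bn k + k"

lemma lin_bounds:
  fixes n d n1 d1 k1 n2 d2 k2 k X B :: int
  assumes "d1 \<le> 4*X" "d2 \<le> 4*X" "0 \<le> X" "n \<le> B" "-n1-1 \<le> d1" "-n2-1 \<le> d2"
    "1 \<le> n1" "1 \<le> n2" "1 \<le> k1" "0 \<le> k2" "n = n1+n2" "d = d1+d2" "k = k1+k2" "k < n" "0 < k"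
  shows "\<bar>n\<bar> \<le> 2*(4*X + B + k + 1) + B + k \<and> \<bar>d\<bar> \<le> 2*(4*X + B + k + 1) + B + k
    \<and> \<bar>n1\<bar> \<le> 2*(4*X + B + k + 1) + B + k \<and> \<bar>d1\<bar> \<le> 2*(4*X + B + k + 1) + B + k
    \<and> \<bar>k1\<bar> \<le> 2*(4*X + B + k + 1) + B + k \<and> \<bar>n2\<bar> \<le> 2*(4*X + B + k + 1) + B + k
    \<and> \<bar>d2\<bar> \<le> 2*(4*X + B + k + 1) + B + k \<and> \<bar>k2\<bar> \<le> 2*(4*X + B + k + 1) + B + k"
proof -
  have a1: "n \<le> 2*(4*X + B + k + 1) + B + k" using assms unfolding distrib_left by linarith
  have a2: "-n \<le> 2*(4*X + B + k + 1) + B + k" using assms unfolding distrib_left by linarith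
  have b1: "d \<le> 2*(4*X + B + k + 1) + B + k" using assms unfolding distrib_left by linarith
  have b2: "-d \<le> 2*(4*X + B + k + 1) + B + k" using assms unfolding distrib_left by linarith
  have c1: "n1 \<le> 2*(4*X + B + k + 1) + B + k" using assms unfolding distrib_left by linarith
  have c2: "-n1 \<le> 2*(4*X + B + k + 1) + B + k" using assms unfolding distrib_left by linarith
  have e1: "d1 \<le> 2*(4*X + B + k + 1) + B + k" using assms unfolding distrib_left by linarith
  have e2: "-d1 \<le> 2*(4*X + B + k + 1) + B + k" using assms unfolding distrib_left by linarith
  have f1: "k1 \<le> 2*(4*X + B + k + 1) + B + k" using assms unfolding distrib_left by linarith
  have f2: "-k1 \<le> 2*(4*X + B + k + 1) + B + k" using assms unfolding distrib_left by linarith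
  have g1: "n2 \<le> 2*(4*X + B + k + 1) + B + k" using assms unfolding distrib_left by linarith
  have g2: "-n2 \<le> 2*(4*X + B + k + 1) + B + k" using assms unfolding distrib_left by linarith
  have h1: "d2 \<le> 2*(4*X + B + k + 1) + B + k" using assms unfolding distrib_left by linarith
  have h2: "-d2 \<le> 2*(4*X + B + k + 1) + B + k" using assms unfolding distrib_left by linarith
  have i1: "k2 \<le> 2*(4*X + B + k + 1) + B + k" using assms unfolding distrib_left by linarith
  have i2: "-k2 \<le> 2*(4*X + B + k + 1) + B + k" using assms unfolding distrib_left by linarith
  show ?thesis using a1 a2 b1 b2 c1 c2 e1 e2 f1 f2 g1 g2 h1 h2 i1 i2 by (simp only: abs_le_iff)
qed

lemma bound_all:
  assumes A: "allowable n d k \<alpha> n1 d1 k1 n2 d2 k2"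
    and C: "C12 n1 d1 k1 n2 d2 k2 \<le> 0 \<or> C21 n1 d1 k1 n2 d2 k2 \<le> 0"
  shows "\<bar>n\<bar> \<le> Wb k \<and> \<bar>d\<bar> \<le> Wb k \<and> \<bar>n1\<bar> \<le> Wb k \<and> \<bar>d1\<bar> \<le> Wb k \<and> \<bar>k1\<bar> \<le> Wb k
    \<and> \<bar>n2\<bar> \<le> Wb k \<and> \<bar>d2\<bar> \<le> Wb k \<and> \<bar>k2\<bar> \<le> Wb k
    \<and> \<alpha> = real_of_int (d2*n1 - d1*n2) / real_of_int (n2*k1 - n1*k2)"
proof -
  note F = allow_facts[OF A]
  have k0: "0 < k" and kn: "k < n" and n1: "1 \<le> n1" and n2: "1 \<le> n2" and k1: "1 \<le> k1" and k2: "0 \<le> k2"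
    and hn: "n = n1+n2" and hd: "d = d1+d2" and hk: "k = k1+k2"
    and al: "\<alpha> = real_of_int (d2*n1 - d1*n2) / real_of_int (n2*k1 - n1*k2)"
    and P2: "(k2 = 0 \<and> n2 = 1) \<or> (1 \<le> k2 \<and> n2^2 - 1 - k2*(n2-k2) \<le> k2*d2)"
    using F(1,2,3,4,5,6,7,8,9,12,17) by -
  note T = ty_facts[OF k0 kn, of d]
  have Sx: "S n k d n1 n2 k1 k2 d1 d2 (ty_t n d) (ty_a n d) (ty_l n d k)"
    by (rule S.intro[OF hn hk hd k0 kn n1 n2 k1 k2 F(10) F(11) T(1) T(2) T(3) T(4) F(13) F(14) F(15) F(16)])
  have main: "n \<le> Bn k \<and> d1 \<le> 4*(n+k)^6 \<and> d2 \<le> 4*(n+k)^6 \<and> -n2 - 1 \<le> d2"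
  proof (cases "k2 = 0 \<and> n2 = 1")
    case True
    then have z: "k2 = 0" and o: "n2 = 1" by blast+
    note cc = S.case_k20[OF Sx z o]
    have "0 < C12 n1 d1 k1 n2 d2 k2" "0 < C21 n1 d1 k1 n2 d2 k2" by (fact cc(1), fact cc(2))
    then show ?thesis using C by linarith
  next
    case False
    then have k2p: "1 \<le> k2" and P2': "n2^2 - 1 - k2*(n2-k2) \<le> k2*d2" using P2 by blast+
    have lb: "-n2 - 1 \<le> d2" using S.d2_lb_gen[OF Sx k2p P2'] .
    show ?thesis
    proof (cases "C12 n1 d1 k1 n2 d2 k2 \<le> 0")
      case True
      have r: "n \<le> (k+1)*(k+k^3) \<and> d1 \<le> 4*(n+k)^6 \<and> d2 \<le> 4*(n+k)^6"
        using S.case_c12[OF Sx k2p P2' True] .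
      show ?thesis unfolding Bn_def using r lb by blast
    next
      case False
      then have "C21 n1 d1 k1 n2 d2 k2 \<le> 0" using C by simp
      note r = S.case_c21[OF Sx k2p P2' this]
      show ?thesis unfolding Bn_def using r lb by blast
    qed
  qed
  have d1lb: "-n1 - 1 \<le> d1" using S.d1_lb[OF Sx] .
  have nB: "n \<le> Bn k" using main by blast
  have "(n+k)^6 \<le> (Bn k + k)^6" using nB kn k0 by (intro power_mono) auto
  moreover have "d1 \<le> 4*(n+k)^6" "d2 \<le> 4*(n+k)^6" using main by blast+
  ultimately have d12: "d1 \<le> 4*(Bn k + k)^6" "d2 \<le> 4*(Bn k + k)^6" by linarith+
  have R0: "0 \<le> (Bn k + k)^6" using nB kn k0 by simp
  have lbs: "-n2 - 1 \<le> d2" using main by blast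
  have W: "Wb k = 2*(4*(Bn k + k)^6 + Bn k + k + 1) + Bn k + k" unfolding Wb_def by simp
  have "\<bar>n\<bar> \<le> Wb k \<and> \<bar>d\<bar> \<le> Wb k \<and> \<bar>n1\<bar> \<le> Wb k \<and> \<bar>d1\<bar> \<le> Wb k \<and> \<bar>k1\<bar> \<le> Wb k
    \<and> \<bar>n2\<bar> \<le> Wb k \<and> \<bar>d2\<bar> \<le> Wb k \<and> \<bar>k2\<bar> \<le> Wb k" unfolding W
    using lin_bounds[OF d12 R0 nB d1lb lbs n1 n2 k1 k2 hn hd hk kn k0] .
  then show ?thesis using al by blast
qed

theorem theorem5p8:
  fixes k :: int
  assumes "k > 0"
  shows "finite {(n, d, \<alpha>, n1, d1, k1, n2, d2, k2).
            allowable n d k \<alpha> n1 d1 k1 n2 d2 k2 \<and>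
            (C12 n1 d1 k1 n2 d2 k2 \<le> 0 \<or> C21 n1 d1 k1 n2 d2 k2 \<le> 0)}"
proof -
  define W where "W = Wb k"
  define I where "I = {-W..W}"
  define g where "g = (\<lambda>(n::int, d::int, n1::int, d1::int, k1::int, n2::int, d2::int, k2::int).
     (n, d, real_of_int (d2*n1 - d1*n2) / real_of_int (n2*k1 - n1*k2), n1, d1, k1, n2, d2, k2))"
  have fin: "finite (g ` (I \<times> I \<times> I \<times> I \<times> I \<times> I \<times> I \<times> I))" unfolding I_def by simp
  have "{(n, d, \<alpha>, n1, d1, k1, n2, d2, k2).
            allowable n d k \<alpha> n1 d1 k1 n2 d2 k2 \<and>
            (C12 n1 d1 k1 n2 d2 k2 \<le> 0 \<or> C21 n1 d1 k1 n2 d2 k2 \<le> 0)}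
        \<subseteq> g ` (I \<times> I \<times> I \<times> I \<times> I \<times> I \<times> I \<times> I)"
  proof
    fix x assume "x \<in> {(n, d, \<alpha>, n1, d1, k1, n2, d2, k2).
            allowable n d k \<alpha> n1 d1 k1 n2 d2 k2 \<and>
            (C12 n1 d1 k1 n2 d2 k2 \<le> 0 \<or> C21 n1 d1 k1 n2 d2 k2 \<le> 0)}"
    then obtain n d \<alpha> n1 d1 k1 n2 d2 k2 where x: "x = (n, d, \<alpha>, n1, d1, k1, n2, d2, k2)"
      and A: "allowable n d k \<alpha> n1 d1 k1 n2 d2 k2"
      and C: "C12 n1 d1 k1 n2 d2 k2 \<le> 0 \<or> C21 n1 d1 k1 n2 d2 k2 \<le> 0" by auto
    note B = bound_all[OF A C]
    have "x = g (n, d, n1, d1, k1, n2, d2, k2)" using B x unfolding g_def by simp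
    moreover have "(n, d, n1, d1, k1, n2, d2, k2) \<in> I \<times> I \<times> I \<times> I \<times> I \<times> I \<times> I \<times> I"
      using B unfolding I_def W_def by (simp add: abs_le_iff)
    ultimately show "x \<in> g ` (I \<times> I \<times> I \<times> I \<times> I \<times> I \<times> I \<times> I)" by blast
  qed
  then show ?thesis using fin by (rule finite_subset)
qed

end
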